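(* Let $a \in \mathbb{C}$ and $w \in \mathbb{C}\setminus\{0\}$. For $\tau > 0$ small enough that $0 < \tau |w| e^{\tau|a|} < 1/e$, define $$\Sigma_0^+(\tau) := \tfrac{1}{\tau}W_0\big(\tau|w|e^{-\tau|a|}\big) + |a|,\quad \Sigma_0^-(\tau) := \tfrac{1}{\tau}W_0\big(-\tau|w|e^{\tau|a|}\big) - |a|,\quad \Sigma_{-1}(\tau) := \tfrac{1}{\tau}W_{-1}\big(-\tau|w|e^{\tau|a|}\big) - |a|.$$ Then for every sufficiently small $\tau > 0$, every root $z$ of $z + a - we^{-\tau z} = 0$ satisfies $$\operatorname{Re}(z) \le \Sigma_{-1}(\tau) \quad\text{or}\quad \Sigma_0^-(\tau) \le \operatorname{Re}(z) \le \Sigma_0^+(\tau),$$ and moreover $\lim_{\tau\downarrow 0}\Sigma_0^\pm(\tau) = \pm(|a|+|w|)$ and $\lim_{\tau\downarrow 0}\Sigma_{-1}(\tau) = -\infty$.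
   Context: $W_0 : [-1/e,\infty) \to [-1,\infty)$ is the inverse of the increasing function $x \mapsto xe^x$ on $[-1,\infty)$, and $W_{-1} : [-1/e, 0) \to (-\infty,-1]$ is the inverse of the decreasing function $x\mapsto xe^x$ on $(-\infty,-1]$ (the two real branches of the Lambert $W$ function). *)

theory Defs
  imports "HOL-Analysis.Analysis"
begin

text \<open>Principal real branch of Lambert W: inverse of x * exp x on [-1, inf).
  Only meaningful for y \<ge> -1/e.\<close>
definition LambertW0 :: "real \<Rightarrow> real" where
  "LambertW0 y = (THE x. x \<ge> -1 \<and> x * exp x = y)"

text \<open>Lower real branch of Lambert W: inverse of x * exp x on (-inf, -1].
  Only meaningful for -1/e \<le> y < 0.\<close>
definition LambertWm1 :: "real \<Rightarrow> real" where
  "LambertWm1 y = (THE x. x \<le> -1 \<and> x * exp x = y)"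

definition Sigma0_plus :: "complex \<Rightarrow> complex \<Rightarrow> real \<Rightarrow> real" where
  "Sigma0_plus a w \<tau> = LambertW0 (\<tau> * cmod w * exp (- \<tau> * cmod a)) / \<tau> + cmod a"

definition Sigma0_minus :: "complex \<Rightarrow> complex \<Rightarrow> real \<Rightarrow> real" where
  "Sigma0_minus a w \<tau> = LambertW0 (- \<tau> * cmod w * exp (\<tau> * cmod a)) / \<tau> - cmod a"

definition Sigma_m1 :: "complex \<Rightarrow> complex \<Rightarrow> real \<Rightarrow> real" where
  "Sigma_m1 a w \<tau> = LambertWm1 (- \<tau> * cmod w * exp (\<tau> * cmod a)) / \<tau> - cmod a"

end

theory Submission
  imports Defs "HOL-Real_Asymp.Real_Asymp"
begin

lemma xexp_deriv: "((\<lambda>x::real. x * exp x) has_real_derivative (1 + t) * exp t) (at t)"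
  by (auto intro!: derivative_eq_intros simp: algebra_simps)

lemma xexp_cont: "continuous_on S (\<lambda>x::real. x * exp x)"
  by (intro continuous_intros)

lemma xexp_strict_inc:
  fixes x y :: real
  assumes "-1 \<le> x" "x < y"
  shows "x * exp x < y * exp y"
proof (rule DERIV_pos_imp_increasing_open[OF assms(2)])
  fix t assume "x < t" "t < y"
  then show "\<exists>d. ((\<lambda>x::real. x * exp x) has_real_derivative d) (at t) \<and> d > 0"
    using assms by (intro exI[of _ "(1+t)*exp t"]) (auto intro: xexp_deriv)
qed (rule xexp_cont)

lemma xexp_strict_dec:
  fixes x y :: real
  assumes "y \<le> -1" "x < y"
  shows "x * exp x > y * exp y"
proof (rule DERIV_neg_imp_decreasing_open[OF assms(2)])
  fix t assume "x < t" "t < y"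
  then show "\<exists>d. ((\<lambda>x::real. x * exp x) has_real_derivative d) (at t) \<and> d < 0"
    using assms by (intro exI[of _ "(1+t)*exp t"]) (auto intro!: xexp_deriv mult_neg_pos)
qed (rule xexp_cont)

lemma W0_ex1:
  fixes y :: real
  assumes "- exp (-1) \<le> y"
  shows "\<exists>!x. x \<ge> -1 \<and> x * exp x = y"
proof -
  have "y + 1 > 0" using assms by (smt (verit) exp_less_one_iff)
  have "y + 1 \<le> (y+1) * exp (y+1)" using \<open>y+1>0\<close> by (simp add: one_le_exp_iff)
  hence b: "y \<le> (y+1) * exp (y+1)" by linarith
  have a: "(-1::real) * exp (-1) \<le> y" using assms by simp
  have ab: "-1 \<le> y + 1" using \<open>y+1>0\<close> by linarith
  from IVT'[OF a b ab xexp_cont] obtain x where x: "-1 \<le> x" "x * exp x = y" by blast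
  have "x' = x" if "x' \<ge> -1" "x' * exp x' = y" for x'
  proof (rule linorder_cases[of x' x])
    assume "x' < x"
    then have "x' * exp x' < x * exp x" by (rule xexp_strict_inc[OF that(1)])
    then show ?thesis using that x by simp
  next
    assume "x < x'"
    then have "x * exp x < x' * exp x'" by (rule xexp_strict_inc[OF x(1)])
    then show ?thesis using that x by simp
  qed
  with x show ?thesis by blast
qed

lemma W0_props:
  assumes "- exp (-1) \<le> y"
  shows "LambertW0 y \<ge> -1 \<and> LambertW0 y * exp (LambertW0 y) = y"
  unfolding LambertW0_def using theI'[OF W0_ex1[OF assms]] .

lemma xexp_bot: "((\<lambda>x::real. x * exp x) \<longlongrightarrow> 0) at_bot"
  by real_asymp

lemma Wm1_ex1:
  fixes y :: real
  assumes "- exp (-1) \<le> y" "y < 0"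
  shows "\<exists>!x. x \<le> -1 \<and> x * exp x = y"
proof -
  have "eventually (\<lambda>x::real. x * exp x > y) at_bot"
    using order_tendstoD(1)[OF xexp_bot assms(2)] .
  moreover have "eventually (\<lambda>x::real. x \<le> -1) at_bot" by (rule eventually_le_at_bot)
  ultimately have "eventually (\<lambda>x::real. x * exp x > y \<and> x \<le> -1) at_bot"
    by (rule eventually_conj)
  then obtain N where N: "\<And>x. x \<le> N \<Longrightarrow> x * exp x > y \<and> x \<le> -1"
    unfolding eventually_at_bot_linorder by blast
  define b where "b = N"
  have b: "b * exp b > y" "b \<le> -1" using N[of N] b_def by auto
  have a: "(-1::real) * exp (-1) \<le> y" using assms by simp
  have b1: "b * exp b \<ge> y" using b(1) by simp
  from IVT2'[OF a b1 b(2) xexp_cont] obtain x where x: "x \<le> -1" "x * exp x = y" by blast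
  have "x' = x" if "x' \<le> -1" "x' * exp x' = y" for x'
  proof (rule linorder_cases[of x' x])
    assume "x' < x"
    then have "x * exp x < x' * exp x'" by (rule xexp_strict_dec[OF x(1)])
    then show ?thesis using that x by simp
  next
    assume "x < x'"
    then have "x' * exp x' < x * exp x" by (rule xexp_strict_dec[OF that(1)])
    then show ?thesis using that x by simp
  qed
  with x show ?thesis by blast
qed

lemma Wm1_props:
  assumes "- exp (-1) \<le> y" "y < 0"
  shows "LambertWm1 y \<le> -1 \<and> LambertWm1 y * exp (LambertWm1 y) = y"
  unfolding LambertWm1_def using theI'[OF Wm1_ex1[OF assms]] .

lemma W0_bound:
  assumes "- exp (-1) \<le> y"
  shows "\<bar>LambertW0 y\<bar> \<le> \<bar>y\<bar> * exp 1"
proof -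
  define u where "u = LambertW0 y"
  have u: "u \<ge> -1" "u * exp u = y" using W0_props[OF assms] u_def by auto
  show ?thesis
  proof (cases "u \<ge> 0")
    case True
    have "u \<le> u * exp u" using True by (simp add: mult_le_cancel_left1)
    moreover have "u * exp u * 1 \<le> u * exp u * exp 1" by (rule mult_left_mono) (use True in auto)
    ultimately show ?thesis using True u by (simp add: u_def)
  next
    case False
    have "exp (-1) \<le> exp u" using u by simp
    hence "u * exp u \<le> u * exp (-1)" using False by (simp add: mult_le_cancel_left)
    hence "y * exp 1 \<le> u * exp (-1) * exp 1" using u by (simp add: mult_right_mono)
    hence "y * exp 1 \<le> u" by (simp add: exp_minus field_simps)
    moreover have "y < 0" using False u(2) by (metis exp_gt_zero mult_neg_pos not_le)
    ultimately show ?thesis using False by (simp add: u_def)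
  qed
qed

lemma root_bounds:
  fixes a w z :: complex and \<tau> :: real
  assumes tau: "\<tau> > 0" and small: "\<tau> * cmod w * exp (\<tau> * cmod a) < exp (-1)"
    and root: "z + a - w * exp (- complex_of_real \<tau> * z) = 0"
  shows "Re z \<le> Sigma_m1 a w \<tau> \<or> (Sigma0_minus a w \<tau> \<le> Re z \<and> Re z \<le> Sigma0_plus a w \<tau>)"
proof -
  define A where "A = cmod a"
  define B where "B = cmod w"
  define x where "x = Re z"
  have B0: "B \<ge> 0" by (simp add: B_def)
  have e: "z + a = w * exp (- complex_of_real \<tau> * z)" using root by (simp add: algebra_simps)
  have n: "cmod (z + a) = B * exp (-\<tau> * x)"
    unfolding e B_def x_def by (simp add: norm_mult)
  have ra: "\<bar>Re a\<bar> \<le> A" unfolding A_def by (rule abs_Re_le_cmod)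
  have rz: "\<bar>Re (z + a)\<bar> \<le> cmod (z + a)" by (rule abs_Re_le_cmod)
  have r1: "x - A \<le> B * exp (-\<tau> * x)" using ra rz n by (simp add: x_def)
  have r2: "-x - A \<le> B * exp (-\<tau> * x)" using ra rz n by (simp add: x_def)
  define p where "p = \<tau> * B * exp (- \<tau> * A)"
  define c where "c = \<tau> * B * exp (\<tau> * A)"
  have c0: "c \<ge> 0" using tau B0 by (simp add: c_def)
  have cs: "c < exp (-1)" using small by (simp add: c_def A_def B_def)
  define u where "u = \<tau> * (x - A)"
  have "\<tau> * (x - A) * (exp (\<tau> * x) * exp (- \<tau> * A)) \<le> \<tau> * (B * exp (-\<tau> * x)) * (exp (\<tau> * x) * exp (- \<tau> * A))"
    by (intro mult_right_mono mult_left_mono r1) (use tau in auto)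
  also have "\<dots> = p" by (simp add: p_def mult_exp_exp[symmetric] del: mult_exp_exp) (simp add: exp_minus field_simps)
  finally have up: "u * exp u \<le> p"
    by (simp add: u_def mult_exp_exp right_diff_distrib algebra_simps)
  have p0: "p \<ge> 0" using tau B0 by (simp add: p_def)
  define m where "m = LambertW0 p"
  have m: "m \<ge> -1" "m * exp m = p" using W0_props[of p] p0 m_def
    by (smt (verit) exp_gt_zero)+
  have "u \<le> m"
  proof (rule ccontr)
    assume "\<not> u \<le> m"
    hence "m * exp m < u * exp u" using xexp_strict_inc[of m u] m by auto
    thus False using up m by simp
  qed
  hence "x - A \<le> m / \<tau>" using tau by (simp add: u_def pos_le_divide_eq mult.commute)
  hence U: "x \<le> Sigma0_plus a w \<tau>"
    by (simp add: Sigma0_plus_def m_def p_def A_def B_def)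
  define v where "v = \<tau> * (x + A)"
  have "\<tau> * (-x - A) * (exp (\<tau> * x) * exp (\<tau> * A)) \<le> \<tau> * (B * exp (-\<tau> * x)) * (exp (\<tau> * x) * exp (\<tau> * A))"
    by (intro mult_right_mono mult_left_mono r2) (use tau in auto)
  also have "\<dots> = c" by (simp add: c_def mult_exp_exp[symmetric] del: mult_exp_exp) (simp add: exp_minus field_simps)
  finally have lo: "- c \<le> v * exp v"
    by (simp add: v_def mult_exp_exp algebra_simps)
  have mc1: "- exp (-1) \<le> - c" using cs by simp
  show ?thesis
  proof (cases "v \<ge> -1")
    case True
    define m0 where "m0 = LambertW0 (-c)"
    have m0: "m0 \<ge> -1" "m0 * exp m0 = -c" using W0_props[OF mc1] m0_def by auto
    have "m0 \<le> v"
    proof (rule ccontr)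
      assume "\<not> m0 \<le> v"
      hence "v * exp v < m0 * exp m0" using xexp_strict_inc[of v m0] True by auto
      thus False using lo m0 by simp
    qed
    hence "m0 / \<tau> \<le> x + A" using tau by (simp add: v_def pos_divide_le_eq mult.commute)
    hence "Sigma0_minus a w \<tau> \<le> x"
      by (simp add: Sigma0_minus_def m0_def c_def A_def B_def)
    thus ?thesis using U by (simp add: x_def)
  next
    case False
    have cpos: "- c < 0"
    proof -
      have "- c \<le> v * exp v" by (rule lo)
      have "v * exp v < 0" using False by (simp add: mult_neg_pos)
      have "c \<noteq> 0" using False lo
        by (smt (verit, best) exp_gt_zero mult_neg_pos)
      thus ?thesis using c0 by simp
    qed
    define m1 where "m1 = LambertWm1 (-c)"
    have m1: "m1 \<le> -1" "m1 * exp m1 = -c" using Wm1_props[OF mc1 cpos] m1_def by auto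
    have "v \<le> m1"
    proof (rule ccontr)
      assume "\<not> v \<le> m1"
      hence "m1 < v" by simp
      moreover have "v \<le> -1" using False by simp
      ultimately have "v * exp v < m1 * exp m1" by (rule xexp_strict_dec[rotated])
      thus False using lo m1 by simp
    qed
    hence "x + A \<le> m1 / \<tau>" using tau by (simp add: v_def pos_le_divide_eq mult.commute)
    hence "x \<le> Sigma_m1 a w \<tau>"
      by (simp add: Sigma_m1_def m1_def c_def A_def B_def)
    thus ?thesis by (simp add: x_def)
  qed
qed

lemma W0_tendsto0:
  assumes "(f \<longlongrightarrow> 0) F" "eventually (\<lambda>t. - exp (-1) \<le> f t) F"
  shows "((\<lambda>t. LambertW0 (f t)) \<longlongrightarrow> 0) F"
proof (rule tendsto_0_le[OF assms(1), of _ "exp 1"])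
  show "\<forall>\<^sub>F x in F. norm (LambertW0 (f x)) \<le> norm (f x) * exp 1"
    using assms(2) by eventually_elim (simp add: W0_bound)
qed

lemma W0_div: "- exp (-1) \<le> y \<Longrightarrow> LambertW0 y = y * exp (- LambertW0 y)"
  using W0_props[of y] by (metis exp_minus_inverse mult.assoc mult.right_neutral)

theorem mainTheorem3:
  fixes a w :: complex
  assumes "w \<noteq> 0"
  shows "(\<forall>\<^sub>F \<tau> in at_right 0.
            \<forall>z::complex. z + a - w * exp (- complex_of_real \<tau> * z) = 0 \<longrightarrow>
              (Re z \<le> Sigma_m1 a w \<tau> \<or>
               (Sigma0_minus a w \<tau> \<le> Re z \<and> Re z \<le> Sigma0_plus a w \<tau>)))
       \<and> (Sigma0_plus a w \<longlongrightarrow> cmod a + cmod w) (at_right 0)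
       \<and> (Sigma0_minus a w \<longlongrightarrow> - (cmod a + cmod w)) (at_right 0)
       \<and> filterlim (Sigma_m1 a w) at_bot (at_right 0)"
proof -
  define A where "A = cmod a"
  define B where "B = cmod w"
  have B0: "B \<ge> 0" by (simp add: B_def)
  define c where "c = (\<lambda>\<tau>::real. \<tau> * B * exp (\<tau> * A))"
  define p where "p = (\<lambda>\<tau>::real. \<tau> * B * exp (- \<tau> * A))"
  have ct: "(c \<longlongrightarrow> 0) (at_right 0)"
  proof -
    have "((\<lambda>\<tau>::real. \<tau> * B * exp (\<tau> * A)) \<longlongrightarrow> 0 * B * exp (0 * A)) (at_right 0)"
      by (intro tendsto_intros)
    thus ?thesis by (simp add: c_def)
  qed
  have pt: "(p \<longlongrightarrow> 0) (at_right 0)"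
  proof -
    have "((\<lambda>\<tau>::real. \<tau> * B * exp (- \<tau> * A)) \<longlongrightarrow> 0 * B * exp (- 0 * A)) (at_right 0)"
      by (intro tendsto_intros)
    thus ?thesis by (simp add: p_def)
  qed
  have pos: "eventually (\<lambda>\<tau>::real. \<tau> > 0) (at_right 0)"
    by (simp add: eventually_at_right_less)
  have sm: "eventually (\<lambda>\<tau>. c \<tau> < exp (-1)) (at_right 0)"
    using order_tendstoD(2)[OF ct] by simp
  have ev: "eventually (\<lambda>\<tau>. \<tau> > 0 \<and> c \<tau> < exp (-1)) (at_right 0)"
    using pos sm by (rule eventually_conj)
  have P1: "\<forall>\<^sub>F \<tau> in at_right 0.
            \<forall>z::complex. z + a - w * exp (- complex_of_real \<tau> * z) = 0 \<longrightarrow>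
              (Re z \<le> Sigma_m1 a w \<tau> \<or>
               (Sigma0_minus a w \<tau> \<le> Re z \<and> Re z \<le> Sigma0_plus a w \<tau>))"
    using ev
  proof eventually_elim
    case (elim \<tau>)
    show ?case
    proof (intro allI impI)
      fix z :: complex assume r: "z + a - w * exp (- complex_of_real \<tau> * z) = 0"
      have s: "\<tau> * cmod w * exp (\<tau> * cmod a) < exp (-1)" using elim by (simp add: c_def A_def B_def)
      show "Re z \<le> Sigma_m1 a w \<tau> \<or> (Sigma0_minus a w \<tau> \<le> Re z \<and> Re z \<le> Sigma0_plus a w \<tau>)"
        by (rule root_bounds[OF elim(1)[THEN conjunct1] s r])
    qed
  qed
  have P2: "(Sigma0_plus a w \<longlongrightarrow> A + B) (at_right 0)"
  proof -
    have pg: "eventually (\<lambda>\<tau>. - exp (-1) \<le> p \<tau>) (at_right 0)"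
      using pos
    proof eventually_elim
      case (elim \<tau>)
      have "0 \<le> p \<tau>" using elim B0 by (simp add: p_def)
      moreover have "0 < exp (-1::real)" by simp
      ultimately show ?case by linarith
    qed
    have W: "((\<lambda>\<tau>. LambertW0 (p \<tau>)) \<longlongrightarrow> 0) (at_right 0)"
      by (rule W0_tendsto0[OF pt pg])
    have L: "((\<lambda>\<tau>. B * exp (- \<tau> * A) * exp (- LambertW0 (p \<tau>)) + A) \<longlongrightarrow> B * exp (- 0 * A) * exp (- 0) + A) (at_right 0)"
      by (intro tendsto_intros W)
    have EV: "eventually (\<lambda>\<tau>. B * exp (- \<tau> * A) * exp (- LambertW0 (p \<tau>)) + A = Sigma0_plus a w \<tau>) (at_right 0)"
      using pos pg
    proof eventually_elim
      case (elim \<tau>)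
      have "LambertW0 (p \<tau>) / \<tau> = p \<tau> * exp (- LambertW0 (p \<tau>)) / \<tau>"
        by (rule arg_cong[where f="\<lambda>x. x / \<tau>"], rule W0_div[OF elim(2)])
      also have "\<dots> = B * exp (- \<tau> * A) * exp (- LambertW0 (p \<tau>))"
        using elim(1) by (simp add: p_def)
      finally have "LambertW0 (p \<tau>) / \<tau> = B * exp (- \<tau> * A) * exp (- LambertW0 (p \<tau>))" .
      thus ?case by (simp add: Sigma0_plus_def p_def A_def B_def)
    qed
    have X: "(Sigma0_plus a w \<longlongrightarrow> B * exp (- 0 * A) * exp (- 0) + A) (at_right 0)"
      by (rule tendsto_cong[OF EV, THEN iffD1, OF L])
    have eq: "B * exp (- 0 * A) * exp (- 0) + A = A + B" by simp
    show ?thesis by (simp only: eq[symmetric] X)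
  qed
  have P3: "(Sigma0_minus a w \<longlongrightarrow> - (A + B)) (at_right 0)"
  proof -
    have pg: "eventually (\<lambda>\<tau>. - exp (-1) \<le> - c \<tau>) (at_right 0)"
      using sm by eventually_elim simp
    have W: "((\<lambda>\<tau>. LambertW0 (- c \<tau>)) \<longlongrightarrow> 0) (at_right 0)"
      by (rule W0_tendsto0[OF _ pg]) (use tendsto_minus[OF ct] in simp)
    have L: "((\<lambda>\<tau>. - B * exp (\<tau> * A) * exp (- LambertW0 (- c \<tau>)) - A) \<longlongrightarrow> - B * exp (0 * A) * exp (- 0) - A) (at_right 0)"
      by (intro tendsto_intros W)
    have EV: "eventually (\<lambda>\<tau>. - B * exp (\<tau> * A) * exp (- LambertW0 (- c \<tau>)) - A = Sigma0_minus a w \<tau>) (at_right 0)"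
      using pos pg
    proof eventually_elim
      case (elim \<tau>)
      have "LambertW0 (- c \<tau>) / \<tau> = - c \<tau> * exp (- LambertW0 (- c \<tau>)) / \<tau>"
        by (rule arg_cong[where f="\<lambda>x. x / \<tau>"], rule W0_div[OF elim(2)])
      also have "\<dots> = - B * exp (\<tau> * A) * exp (- LambertW0 (- c \<tau>))"
        using elim(1) by (simp add: c_def)
      finally have "LambertW0 (- c \<tau>) / \<tau> = - B * exp (\<tau> * A) * exp (- LambertW0 (- c \<tau>))" .
      thus ?case by (simp add: Sigma0_minus_def c_def A_def B_def)
    qed
    have X: "(Sigma0_minus a w \<longlongrightarrow> - B * exp (0 * A) * exp (- 0) - A) (at_right 0)"
      by (rule tendsto_cong[OF EV, THEN iffD1, OF L])
    have eq: "- B * exp (0 * A) * exp (- 0) - A = - (A + B)" by simp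
    show ?thesis by (simp only: eq[symmetric] X)
  qed
  have P4: "filterlim (Sigma_m1 a w) at_bot (at_right 0)"
  proof (rule filterlim_at_bot_mono)
    show "filterlim (\<lambda>\<tau>::real. - 1 / \<tau> - A) at_bot (at_right 0)" by real_asymp
    show "eventually (\<lambda>\<tau>. Sigma_m1 a w \<tau> \<le> - 1 / \<tau> - A) (at_right 0)"
      using ev
    proof eventually_elim
      case (elim \<tau>)
      have c0: "c \<tau> > 0" using elim assms by (simp add: c_def B_def)
      have "- exp (-1) \<le> - c \<tau>" "- c \<tau> < 0" using elim c0 by auto
      from Wm1_props[OF this] have "LambertWm1 (- c \<tau>) \<le> -1" by simp
      hence "LambertWm1 (- c \<tau>) / \<tau> \<le> -1 / \<tau>" by (rule divide_right_mono) (use elim in simp)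
      thus ?case by (simp add: Sigma_m1_def c_def A_def B_def)
    qed
  qed
  show ?thesis by (intro conjI P1 P2[unfolded A_def B_def] P3[unfolded A_def B_def] P4)
qed

end
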